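(* The probabilistic function $\mathit{I2P}:\mathbb{N}\to\mathcal D(\mathbb{N})$ defined below belongs to $\mathscr{PR}$.
   Context: Fix a computable bijection $\mathit{pair}:\mathbb{N}\times\mathbb{N}\to\mathbb{N}$ with computable inverse; a natural $n=\mathit{pair}(a,b)$ with $b>0$ represents the rational $a/b$. $\mathit{I2P}(n)(1)=q$ and $\mathit{I2P}(n)(0)=1-q$ if $n$ represents a rational $q$ with $0\le q\le 1$, and $\mathit{I2P}(n)(y)=0$ in all other cases. $\mathcal D(X)$ is the set of $\mathcal D:X\to[0,1]$ with $\sum_x\mathcal D(x)\le1$; a PF is a function $\mathbb{N}^k\to\mathcal D(\mathbb{N})$. Basic PFs: $z(n)(0)=1$; $s(n)(n+1)=1$; $\Pi^n_m(k_1,\dots,k_n)(k_m)=1$; $r(x)(x)=r(x)(x+1)=1/2$ (other values $0$). Generalized composition $(f\odot(g_1,\dots,g_n))(\vec x)(y)=\sum_{z_1,\dots,z_n} f(z_1,\dots,z_n)(y)\prod_i g_i(\vec x)(z_i)$; primitive recursion $h=\mathrm{rec}(f,g)$: $h(\vec x,0)=f(\vec x)$, $h(\vec x,y+1)(w)=\sum_z h(\vec x,y)(z)\, g(\vec x,y,z)(w)$; minimization $\mu f(\vec x)(y)=f(\vec x,y)(0)\prod_{z<y}\sum_{k>0}f(\vec x,z)(k)$. $\mathscr{PR}$ is the smallest class of PFs containing the basic PFs and closed under these three operations. *)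

theory Defs
  imports "HOL-Analysis.Analysis" "HOL-Library.Nat_Bijection"
begin

text \<open>A k-ary probabilistic function (PF) is represented as a function from
  argument lists (of length k) to (sub)distributions on nat, given as
  nat \<Rightarrow> real.\<close>

type_synonym pf = "nat list \<Rightarrow> nat \<Rightarrow> real"

text \<open>The fixed computable pairing bijection: Cantor pairing from the library.\<close>
definition pair :: "nat \<Rightarrow> nat \<Rightarrow> nat" where
  "pair a b = prod_encode (a, b)"

definition I2P :: "nat \<Rightarrow> nat \<Rightarrow> real" where
  "I2P n y = (let (a, b) = prod_decode n; q = (real a / real b) in
     if b > 0 \<and> 0 \<le> q \<and> q \<le> 1 then
       (if y = 1 then q else if y = 0 then 1 - q else 0)
     else 0)"

definition comp_pf :: "nat \<Rightarrow> pf \<Rightarrow> pf list \<Rightarrow> pf" where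
  "comp_pf n f gs = (\<lambda>xs y. \<Sum>\<^sub>\<infinity> zs \<in> {zs :: nat list. length zs = n}.
      f zs y * prod_list (map2 (\<lambda>g z. g xs z) gs zs))"

primrec rec_aux :: "pf \<Rightarrow> pf \<Rightarrow> nat list \<Rightarrow> nat \<Rightarrow> nat \<Rightarrow> real" where
  "rec_aux f g xs 0 = f xs"
| "rec_aux f g xs (Suc y) =
     (\<lambda>w. \<Sum>\<^sub>\<infinity> z \<in> (UNIV :: nat set). rec_aux f g xs y z * g (xs @ [y, z]) w)"

definition rec_pf :: "pf \<Rightarrow> pf \<Rightarrow> pf" where
  "rec_pf f g = (\<lambda>xs. rec_aux f g (butlast xs) (last xs))"

definition mu_pf :: "pf \<Rightarrow> pf" where
  "mu_pf f = (\<lambda>xs y. f (xs @ [y]) 0 *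
      (\<Prod>z<y. \<Sum>\<^sub>\<infinity> k \<in> {0<..}. f (xs @ [z]) k))"

inductive_set PR :: "(nat \<times> pf) set" where
  zero: "(1, \<lambda>xs y. if y = 0 then 1 else 0) \<in> PR"
| succ: "(1, \<lambda>xs y. if y = hd xs + 1 then 1 else 0) \<in> PR"
| proj: "1 \<le> m \<Longrightarrow> m \<le> n \<Longrightarrow> (n, \<lambda>xs y. if y = xs ! (m - 1) then 1 else 0) \<in> PR"
| rand: "(1, \<lambda>xs y. if y = hd xs \<or> y = hd xs + 1 then 1 / 2 else 0) \<in> PR"
| comp: "(n, f) \<in> PR \<Longrightarrow> length gs = n \<Longrightarrow> (\<forall>g \<in> set gs. (k, g) \<in> PR)
         \<Longrightarrow> (k, comp_pf n f gs) \<in> PR"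
| recr: "(k, f) \<in> PR \<Longrightarrow> (k + 2, g) \<in> PR \<Longrightarrow> (k + 1, rec_pf f g) \<in> PR"
| mini: "(k + 1, f) \<in> PR \<Longrightarrow> (k, mu_pf f) \<in> PR"

end

theory Submission
  imports Defs "HOL-Library.Nat_Bijection"
begin


lemma infsum_single':
  fixes f :: "'a \<Rightarrow> real"
  assumes "a \<in> A" "\<And>x. x \<in> A \<Longrightarrow> x \<noteq> a \<Longrightarrow> f x = 0"
  shows "infsum f A = f a"
proof -
  have "infsum f A = infsum f {a}"
    by (rule infsum_cong_neutral) (use assms in auto)
  then show ?thesis by simp
qed

definition dirac :: "(nat list \<Rightarrow> nat) \<Rightarrow> pf" where
  "dirac h = (\<lambda>xs y. if y = h xs then 1 else 0)"

definition detk :: "nat \<Rightarrow> (nat list \<Rightarrow> nat) \<Rightarrow> bool" where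
  "detk k h \<longleftrightarrow> (\<exists>h'. (k, dirac h') \<in> PR \<and> (\<forall>xs. length xs = k \<longrightarrow> h' xs = h xs))"

lemma prod_map2_dirac:
  "length zs = length hs \<Longrightarrow> prod_list (map2 (\<lambda>g z. g xs z) (map dirac hs) zs)
     = (if zs = map (\<lambda>h. h xs) hs then 1 else 0)"
proof (induction hs arbitrary: zs)
  case Nil then show ?case by simp
next
  case (Cons h hs)
  then obtain z zs' where zs: "zs = z # zs'" and l: "length zs' = length hs"
    by (cases zs) auto
  show ?case using Cons.IH[OF l] by (simp add: zs dirac_def)
qed

lemma comp_dirac:
  assumes "length hs = n"
  shows "comp_pf n f (map dirac hs) = (\<lambda>xs y. f (map (\<lambda>h. h xs) hs) y)"
proof (intro ext)
  fix xs y
  show "comp_pf n f (map dirac hs) xs y = f (map (\<lambda>h. h xs) hs) y"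
    unfolding comp_pf_def
    by (subst infsum_single'[where a="map (\<lambda>h. h xs) hs"])
       (use assms in \<open>auto simp: prod_map2_dirac\<close>)
qed

lemma detk_comp:
  assumes f: "detk n f" and l: "length hs = n" and hs: "\<forall>h\<in>set hs. detk k h"
  shows "detk k (\<lambda>xs. f (map (\<lambda>h. h xs) hs))"
proof -
  obtain f' where f': "(n, dirac f') \<in> PR" "\<And>xs. length xs = n \<Longrightarrow> f' xs = f xs"
    using f unfolding detk_def by blast
  define P where "P = (\<lambda>h h'. (k, dirac h') \<in> PR \<and> (\<forall>xs. length xs = k \<longrightarrow> h' xs = h xs))"
  have ex: "\<And>h. h \<in> set hs \<Longrightarrow> \<exists>h'. P h h'" using hs unfolding detk_def P_def by blast
  define hs' where "hs' = map (\<lambda>h. SOME h'. P h h') hs"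
  have Ps: "\<And>h. h \<in> set hs \<Longrightarrow> P h (SOME h'. P h h')" using ex by (metis someI_ex)
  have PR1: "\<forall>g\<in>set (map dirac hs'). (k, g) \<in> PR"
    using Ps unfolding hs'_def P_def by auto
  have "(k, comp_pf n (dirac f') (map dirac hs')) \<in> PR"
    by (rule PR.comp[OF f'(1)]) (use l PR1 hs'_def in auto)
  moreover have "comp_pf n (dirac f') (map dirac hs') = dirac (\<lambda>xs. f' (map (\<lambda>h. h xs) hs'))"
    by (subst comp_dirac) (auto simp: hs'_def l dirac_def)
  moreover have "\<forall>xs. length xs = k \<longrightarrow> f' (map (\<lambda>h. h xs) hs') = f (map (\<lambda>h. h xs) hs)"
  proof (intro allI impI)
    fix xs :: "nat list" assume lx: "length xs = k"
    have "map (\<lambda>h. h xs) hs' = map (\<lambda>h. h xs) hs"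
      unfolding hs'_def using Ps lx by (auto simp: P_def)
    then show "f' (map (\<lambda>h. h xs) hs') = f (map (\<lambda>h. h xs) hs)"
      using f'(2) l by simp
  qed
  ultimately show ?thesis unfolding detk_def by auto
qed

primrec Rd :: "(nat list \<Rightarrow> nat) \<Rightarrow> (nat list \<Rightarrow> nat) \<Rightarrow> nat list \<Rightarrow> nat \<Rightarrow> nat" where
  "Rd f g xs 0 = f xs"
| "Rd f g xs (Suc y) = g (xs @ [y, Rd f g xs y])"

lemma rec_aux_dirac: "rec_aux (dirac f) (dirac g) xs y = (\<lambda>w. if w = Rd f g xs y then 1 else 0)"
proof (induction y)
  case 0 then show ?case by (simp add: dirac_def)
next
  case (Suc y)
  show ?case
  proof
    fix w
    show "rec_aux (dirac f) (dirac g) xs (Suc y) w = (if w = Rd f g xs (Suc y) then 1 else 0)"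
    proof -
      have "rec_aux (dirac f) (dirac g) xs (Suc y) w = (\<Sum>\<^sub>\<infinity>z\<in>UNIV. (if z = Rd f g xs y then 1 else 0) * dirac g (xs@[y,z]) w)"
        by (simp add: Suc)
      also have "\<dots> = (if Rd f g xs y = Rd f g xs y then 1 else 0) * dirac g (xs@[y,Rd f g xs y]) w"
        by (rule infsum_single') auto
      finally show ?thesis by (simp add: dirac_def)
    qed
  qed
qed

lemma detk_rec:
  assumes f: "detk k f" and g: "detk (k+2) g"
    and H0: "\<And>xs. length xs = k \<Longrightarrow> H xs 0 = f xs"
    and HS: "\<And>xs y. length xs = k \<Longrightarrow> H xs (Suc y) = g (xs @ [y, H xs y])"
  shows "detk (k+1) (\<lambda>xs. H (butlast xs) (last xs))"
proof -
  obtain f' where f': "(k, dirac f') \<in> PR" "\<And>xs. length xs = k \<Longrightarrow> f' xs = f xs"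
    using f unfolding detk_def by blast
  obtain g' where g': "(k+2, dirac g') \<in> PR" "\<And>xs. length xs = k+2 \<Longrightarrow> g' xs = g xs"
    using g unfolding detk_def by blast
  have "(k+1, rec_pf (dirac f') (dirac g')) \<in> PR" by (rule PR.recr[OF f'(1) g'(1)])
  moreover have "rec_pf (dirac f') (dirac g') = dirac (\<lambda>xs. Rd f' g' (butlast xs) (last xs))"
    unfolding rec_pf_def by (simp add: rec_aux_dirac, simp add: dirac_def)
  moreover have RH: "\<And>ys y. length ys = k \<Longrightarrow> Rd f' g' ys y = H ys y"
  proof -
    fix ys y assume ly: "length (ys::nat list) = k"
    show "Rd f' g' ys y = H ys y"
      by (induction y) (use ly f'(2) g'(2) H0 HS in auto)
  qed
  ultimately show ?thesis unfolding detk_def by (auto intro!: exI[of _ "\<lambda>xs. Rd f' g' (butlast xs) (last xs)"])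
qed

lemma detk_cong: "detk k h \<Longrightarrow> (\<And>xs. length xs = k \<Longrightarrow> h xs = h' xs) \<Longrightarrow> detk k h'"
  unfolding detk_def by metis

lemma det_proj: "i < k \<Longrightarrow> detk k (\<lambda>xs. xs ! i)"
proof -
  assume "i < k"
  then have "(k, \<lambda>xs y. if y = xs ! (Suc i - 1) then 1 else 0) \<in> PR" by (intro PR.proj) auto
  then show ?thesis unfolding detk_def dirac_def by (auto intro!: exI[of _ "\<lambda>xs. xs ! i"])
qed

lemma det_zero1: "detk 1 (\<lambda>xs. 0)"
  using PR.zero unfolding detk_def dirac_def by (auto intro!: exI[of _ "\<lambda>xs. 0"])

lemma det_suc1: "detk 1 (\<lambda>xs. Suc (xs ! 0))"
proof -
  have "detk 1 (\<lambda>xs. hd xs + 1)"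
    using PR.succ unfolding detk_def dirac_def by (auto intro!: exI[of _ "\<lambda>xs. hd xs + 1"])
  then show ?thesis by (rule detk_cong) (case_tac xs, auto)
qed

lemma comp1: "detk 1 f \<Longrightarrow> detk k g \<Longrightarrow> detk k (\<lambda>xs. f [g xs])"
  using detk_comp[of 1 f "[g]" k] by simp
lemma comp2: "detk 2 f \<Longrightarrow> detk k g1 \<Longrightarrow> detk k g2 \<Longrightarrow> detk k (\<lambda>xs. f [g1 xs, g2 xs])"
  using detk_comp[of 2 f "[g1, g2]" k] by simp
lemma comp3: "detk 3 f \<Longrightarrow> detk k g1 \<Longrightarrow> detk k g2 \<Longrightarrow> detk k g3 \<Longrightarrow> detk k (\<lambda>xs. f [g1 xs, g2 xs, g3 xs])"
  using detk_comp[of 3 f "[g1, g2, g3]" k] by simp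



lemma nth3[simp]: "[a,b,c]!2 = c" "[a,b,c,d]!2 = c" "[a,b,c,d]!3 = d"
  by (simp_all add: numeral_2_eq_2 numeral_3_eq_3)

lemma len1: "length xs = 1 \<Longrightarrow> xs = [xs!0]"
  by (cases xs) auto
lemma len2: "length xs = 2 \<Longrightarrow> \<exists>a b. xs = [a, b]"
  by (cases xs; cases "tl xs") auto
lemma len3: "length xs = 3 \<Longrightarrow> \<exists>a b c. xs = [a,b,c]"
  by (cases xs; cases "tl xs"; cases "tl (tl xs)") auto

lemma det_const0: "0 < k \<Longrightarrow> detk k (\<lambda>xs. 0)"
  using comp1[OF det_zero1 det_proj[of 0 k]] by simp

lemma det_suc: "detk k g \<Longrightarrow> detk k (\<lambda>xs. Suc (g xs))"
  using comp1[OF det_suc1, of k g] by simp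

lemma rec1:
  assumes "detk 1 f" "detk 3 g"
    "\<And>x. H x 0 = f [x]" "\<And>x y. H x (Suc y) = g [x, y, H x y]"
  shows "detk 2 (\<lambda>xs. H (xs!0) (xs!1))"
proof -
  have "detk (1+1) (\<lambda>xs. H (butlast xs ! 0) (last xs))"
    proof (rule detk_rec[where H="\<lambda>xs y. H (xs!0) y" and f=f and g=g])
    fix xs y assume "length (xs::nat list) = 1"
    then have "xs = [xs!0]" by (rule len1)
    then show "H (xs ! 0) 0 = f xs" "H (xs ! 0) (Suc y) = g (xs @ [y, H (xs ! 0) y])"
      using assms by (metis append_Cons append_Nil)+
  qed (use assms in \<open>simp_all add: numeral_3_eq_3\<close>)
  then have "detk 2 (\<lambda>xs. H (butlast xs ! 0) (last xs))" by (simp add: numeral_2_eq_2)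
  then show ?thesis
    by (rule detk_cong) (auto dest!: len2 simp del: One_nat_def)
qed

lemma det_add2: "detk 2 (\<lambda>xs. xs!0 + xs!1)"
  by (rule rec1[where H="\<lambda>x y. x + y" and f="\<lambda>xs. xs!0" and g="\<lambda>xs. Suc (xs!2)"]) (rule det_proj, simp, rule det_suc, rule det_proj, simp_all)

lemma det_add: "detk k g1 \<Longrightarrow> detk k g2 \<Longrightarrow> detk k (\<lambda>xs. g1 xs + g2 xs)"
  using comp2[OF det_add2] by simp

lemma det_pred2: "detk 2 (\<lambda>xs. xs!1 - 1)"
  by (rule rec1[where H="\<lambda>x y. y - 1" and f="\<lambda>xs. 0" and g="\<lambda>xs. xs!1"]) (auto intro: det_proj det_const0)

lemma det_pred: "detk k g \<Longrightarrow> detk k (\<lambda>xs. g xs - 1)"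
  using comp2[OF det_pred2, of k g g] by simp

lemma det_sub2: "detk 2 (\<lambda>xs. xs!0 - xs!1)"
  by (rule rec1[where H="\<lambda>x y. x - y" and f="\<lambda>xs. xs!0" and g="\<lambda>xs. xs!2 - 1"]) (rule det_proj, simp, rule det_pred, rule det_proj, simp_all)

lemma det_sub: "detk k g1 \<Longrightarrow> detk k g2 \<Longrightarrow> detk k (\<lambda>xs. g1 xs - g2 xs)"
  using comp2[OF det_sub2] by simp

lemma det_nsg2: "detk 2 (\<lambda>xs. if xs!1 = 0 then 1 else 0)"
  by (rule rec1[where H="\<lambda>x y. if y = 0 then 1 else 0" and f="\<lambda>xs. 1" and g="\<lambda>xs. 0"])
     (auto intro: det_const0 det_suc[of 1 "\<lambda>_. 0", simplified])

lemma det_nsg: "detk k g \<Longrightarrow> detk k (\<lambda>xs. if g xs = 0 then 1 else 0)"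
  using comp2[OF det_nsg2, of k g g] by simp

lemma det_sg: "detk k g \<Longrightarrow> detk k (\<lambda>xs. if g xs = 0 then 0 else 1)"
  by (drule det_nsg, drule det_nsg, erule detk_cong) simp

lemma det_cond3: "detk 3 (\<lambda>xs. if xs!2 = 0 then xs!0 else xs!1)"
proof -
  have "detk (2+1) (\<lambda>xs. (\<lambda>ys y. if y = 0 then ys!0 else ys!1) (butlast xs) (last xs))"
    by (rule detk_rec[where f="\<lambda>xs. xs!0" and g="\<lambda>xs. xs!1"]) (auto intro: det_proj simp: nth_append)
  then have "detk 3 (\<lambda>xs. if last xs = 0 then butlast xs ! 0 else butlast xs ! 1)" by simp
  then show ?thesis
    by (rule detk_cong) (auto dest!: len3 simp del: One_nat_def)
qed

lemma det_if: "detk k c \<Longrightarrow> detk k x \<Longrightarrow> detk k y \<Longrightarrow> detk k (\<lambda>xs. if c xs = 0 then x xs else y xs)"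
  by (rule detk_cong[OF comp3[OF det_cond3, of k x y c]]) auto

lemma det_tri2: "detk 2 (\<lambda>xs. triangle (xs!1))"
  by (rule rec1[where H="\<lambda>x y. triangle y" and f="\<lambda>xs. 0" and g="\<lambda>xs. xs!2 + Suc (xs!1)"]) (rule det_const0, simp, rule det_add, rule det_proj, simp, rule det_suc, rule det_proj, simp_all)

lemma det_tri: "detk k g \<Longrightarrow> detk k (\<lambda>xs. triangle (g xs))"
  using comp2[OF det_tri2, of k g g] by simp



primrec sfun :: "nat \<Rightarrow> nat" where
  "sfun 0 = 0"
| "sfun (Suc n) = sfun n + (if triangle (sfun n) + sfun n - n = 0 then 1 else 0)"

definition Anum where "Anum n = n - triangle (sfun n)"
definition Bden where "Bden n = sfun n - Anum n"

primrec rfun :: "nat \<Rightarrow> nat \<Rightarrow> nat" where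
  "rfun n 0 = Anum n"
| "rfun n (Suc y) = (if Bden n - (rfun n y + rfun n y) = 0 then (rfun n y + rfun n y) - Bden n
                     else rfun n y + rfun n y)"

definition digit where "digit n y = (if Bden n - (rfun n y + rfun n y) = 0 then 1 else (0::nat))"
definition hval where "hval n = (if (if Bden n = 0 then 1 else 0) + (Anum n - Bden n) = 0 then 0 else (1::nat))"

lemma det_sfun2: "detk 2 (\<lambda>xs. sfun (xs!1))"
  apply (rule rec1[where H="\<lambda>x y. sfun y" and f="\<lambda>xs. 0"
        and g="\<lambda>xs. xs!2 + (if triangle (xs!2) + xs!2 - xs!1 = 0 then 1 else 0)"])
  apply (rule det_const0, simp)
  apply (rule det_add, rule det_proj, simp)
  apply (rule det_nsg, rule det_sub, rule det_add, rule det_tri, rule det_proj, simp, rule det_proj, simp,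
         rule det_proj, simp)
  apply simp_all
  done

lemma det_sfun: "detk k g \<Longrightarrow> detk k (\<lambda>xs. sfun (g xs))"
  using comp2[OF det_sfun2, of k g g] by simp

lemma det_A: "detk k g \<Longrightarrow> detk k (\<lambda>xs. Anum (g xs))"
  unfolding Anum_def by (rule det_sub, assumption, rule det_tri, rule det_sfun)

lemma det_B: "detk k g \<Longrightarrow> detk k (\<lambda>xs. Bden (g xs))"
  unfolding Bden_def by (rule det_sub, rule det_sfun, assumption, rule det_A)

lemma det_r2: "detk 2 (\<lambda>xs. rfun (xs!0) (xs!1))"
  apply (rule rec1[where H="rfun" and f="\<lambda>xs. Anum (xs!0)"
        and g="\<lambda>xs. if Bden (xs!0) - (xs!2 + xs!2) = 0 then (xs!2+xs!2) - Bden (xs!0) else xs!2 + xs!2"])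
  apply (rule det_A, rule det_proj, simp)
  apply (rule det_if, rule det_sub, rule det_B, rule det_proj, simp, rule det_add, rule det_proj, simp,
         rule det_proj, simp)
  apply (rule det_sub, rule det_add, rule det_proj, simp, rule det_proj, simp, rule det_B, rule det_proj, simp)
  apply (rule det_add, rule det_proj, simp, rule det_proj, simp)
  apply simp_all
  done

lemma det_digit: "detk 2 (\<lambda>xs. digit (xs!0) (xs!1))"
  unfolding digit_def
  by (rule det_nsg, rule det_sub, rule det_B, rule det_proj, simp, rule det_add; rule det_r2)

lemma det_hval: "detk 2 (\<lambda>xs. hval (xs!0))"
  unfolding hval_def
  by (rule det_sg, rule det_add, rule det_nsg, rule det_B, rule det_proj, simp,
      rule det_sub, rule det_A, rule det_proj, simp, rule det_B, rule det_proj, simp)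

lemma sfun_bounds: "triangle (sfun n) \<le> n \<and> n \<le> triangle (sfun n) + sfun n"
  by (induction n) auto

lemma decode: "prod_decode n = (Anum n, Bden n)"
proof -
  have b: "triangle (sfun n) \<le> n" "n \<le> triangle (sfun n) + sfun n" using sfun_bounds by auto
  have "prod_encode (Anum n, Bden n) = n"
    using b unfolding prod_encode_def Anum_def Bden_def by simp
  then show ?thesis by (metis prod_encode_inverse)
qed



lemma digit01: "digit n y = 0 \<or> digit n y = 1" by (simp add: digit_def)

lemma series_inv:
  assumes b: "0 < Bden n" "Anum n \<le> Bden n"
  shows "rfun n y \<le> Bden n \<and> (\<Sum>i<y. real (digit n i) / 2^Suc i)
           = real (Anum n) / real (Bden n) - real (rfun n y) / (real (Bden n) * 2^y)"
proof (induction y)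
  case 0 then show ?case using b by simp
next
  case (Suc y)
  define r where "r = rfun n y"
  define B where "B = Bden n"
  have IH: "r \<le> B" "(\<Sum>i<y. real (digit n i) / 2^Suc i) = real (Anum n) / real B - real r / (real B * 2^y)"
    using Suc unfolding r_def B_def by auto
  have Bp: "real B > 0" using b B_def by simp
  show ?case
  proof (cases "B \<le> r + r")
    case True
    then have rs: "rfun n (Suc y) = r + r - B" "digit n y = 1"
      unfolding r_def B_def digit_def by auto
    have e1: "real (r + r - B) = 2 * real r - real B" using True by (simp add: of_nat_diff)
    have e2: "(2*real r - real B)/(real B*(2*2^y)) = real r/(real B*2^y) - 1/(2*2^y)"
      using Bp by (simp add: field_simps)
    have "(\<Sum>i<Suc y. real (digit n i) / 2^Suc i) = (\<Sum>i<y. real (digit n i) / 2^Suc i) + 1/(2*2^y)"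
      using rs by simp
    then show ?thesis using IH rs e1 e2 unfolding B_def[symmetric] by simp
  next
    case False
    then have rs: "rfun n (Suc y) = r + r" "digit n y = 0"
      unfolding r_def B_def digit_def by auto
    have e2: "(2*real r)/(real B*(2*2^y)) = real r/(real B*2^y)"
      using Bp by (simp add: field_simps)
    have "(\<Sum>i<Suc y. real (digit n i) / 2^Suc i) = (\<Sum>i<y. real (digit n i) / 2^Suc i)"
      using rs by simp
    then show ?thesis using IH rs e2 False unfolding B_def[symmetric] by simp
  qed
qed

lemma series_sums:
  assumes b: "0 < Bden n" "Anum n \<le> Bden n"
  shows "(\<lambda>i. real (digit n i) / 2^Suc i) sums (real (Anum n) / real (Bden n))"
proof -
  define e where "e y = real (rfun n y) / (real (Bden n) * 2^y)" for y
  have ps: "(\<Sum>i<y. real (digit n i) / 2^Suc i) = real (Anum n) / real (Bden n) - e y" for y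
    using series_inv[OF b] unfolding e_def by auto
  have "e \<longlonglongrightarrow> 0"
  proof (rule Lim_null_comparison)
    show "\<forall>\<^sub>F y in sequentially. norm (e y) \<le> (1/2) ^ y"
    proof (rule always_eventually, rule allI)
      fix y
      have le: "real (rfun n y) \<le> real (Bden n)" using series_inv[OF b, of y] by simp
      have "norm (e y) = real (rfun n y) / (real (Bden n) * 2^y)" unfolding e_def by simp
      also have "\<dots> \<le> real (Bden n) / (real (Bden n) * 2^y)"
        by (rule divide_right_mono) (use le in auto)
      also have "\<dots> = (1/2)^y" using b by (simp add: power_divide)
      finally show "norm (e y) \<le> (1/2) ^ y" .
    qed
    show "(\<lambda>y. (1/2::real) ^ y) \<longlonglongrightarrow> 0" by (rule LIMSEQ_power_zero) simp
  qed
  then have "(\<lambda>y. real (Anum n) / real (Bden n) - e y) \<longlonglongrightarrow> real (Anum n) / real (Bden n) - 0"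
    by (intro tendsto_intros)
  then show ?thesis unfolding sums_def ps by simp
qed



lemma hval0_iff: "hval n = 0 \<longleftrightarrow> 0 < Bden n \<and> Anum n \<le> Bden n"
  by (auto simp: hval_def)

lemma hval01: "hval n = 0 \<or> hval n = 1" by (simp add: hval_def)

lemma value_sum:
  fixes w n :: nat
  shows "(\<Sum>\<^sub>\<infinity>y\<in>UNIV. (if w = digit n y then 1 else 0) * (if hval n = 0 then (1/2::real)^Suc y else 0))
         = I2P n w"
proof (cases "hval n = 0")
  case False
  then have "\<not> (0 < Bden n \<and> Anum n \<le> Bden n)" using hval0_iff[of n] by simp
  then have "I2P n w = 0"
    unfolding I2P_def decode by (auto simp: Let_def)
  then show ?thesis using False by simp
next
  case True
  then have b: "0 < Bden n" "Anum n \<le> Bden n" using hval0_iff[of n] by auto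
  define q where "q = real (Anum n) / real (Bden n)"
  have cond: "0 \<le> q \<and> q \<le> 1" using b unfolding q_def by (simp add: field_simps)
  have I: "I2P n w = (if w = 1 then q else if w = 0 then 1 - q else 0)"
    unfolding I2P_def decode using b cond q_def by (simp add: Let_def)
  have S1: "(\<lambda>i. real (digit n i) * (1/2)^Suc i) sums q"
    using series_sums[OF b] unfolding q_def by (simp add: power_divide)
  have S0: "(\<lambda>i. (1/2)^Suc i - real (digit n i) * (1/2)^Suc i) sums (1 - q)"
    by (rule sums_diff[OF power_half_series S1])
  show ?thesis
  proof (cases "w = 1")
    case w: True
    have "(\<lambda>y. (if w = digit n y then 1 else 0) * (if hval n = 0 then (1/2::real)^Suc y else 0))
          = (\<lambda>i. real (digit n i) * (1/2)^Suc i)"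
    proof
      fix y show "(if w = digit n y then 1 else 0) * (if hval n = 0 then (1/2::real)^Suc y else 0) = real (digit n y) * (1/2)^Suc y"
        using digit01[of n y] True w by (elim disjE) auto
    qed
    moreover have "infsum (\<lambda>i. real (digit n i) * (1/2)^Suc i) UNIV = q"
      by (rule infsumI, rule sums_nonneg_imp_has_sum[OF S1]) simp
    ultimately show ?thesis using I w by simp
  next
    case w1: False
    show ?thesis
    proof (cases "w = 0")
      case w: True
      have "(\<lambda>y. (if w = digit n y then 1 else 0) * (if hval n = 0 then (1/2::real)^Suc y else 0))
            = (\<lambda>i. (1/2)^Suc i - real (digit n i) * (1/2)^Suc i)"
      proof
        fix y show "(if w = digit n y then 1 else 0) * (if hval n = 0 then (1/2::real)^Suc y else 0) = (1/2)^Suc y - real (digit n y) * (1/2)^Suc y"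
          using digit01[of n y] True w by (elim disjE) auto
      qed
      moreover have "infsum (\<lambda>i. (1/2)^Suc i - real (digit n i) * (1/2)^Suc i) UNIV = 1 - q"
      proof -
        have nn: "\<And>i. 0 \<le> (1/2::real)^Suc i - real (digit n i) * (1/2)^Suc i"
        proof -
          fix i show "0 \<le> (1/2::real)^Suc i - real (digit n i) * (1/2)^Suc i"
            using digit01[of n i] by (elim disjE) simp_all
        qed
        show ?thesis by (rule infsumI, rule sums_nonneg_imp_has_sum[OF S0 nn])
      qed
      ultimately show ?thesis using I w by simp
    next
      case w0: False
      have "\<And>y. w \<noteq> digit n y" using digit01 w0 w1 by metis
      then show ?thesis using I w0 w1 by simp
    qed
  qed
qed



theorem mainTheorem9:
  shows "\<exists>f. (1, f) \<in> PR \<and> (\<forall>n. f [n] = I2P n)"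
proof -
  obtain D2 where D2: "(2, dirac D2) \<in> PR" "\<And>xs. length xs = 2 \<Longrightarrow> D2 xs = digit (xs!0) (xs!1)"
    using det_digit unfolding detk_def by blast
  obtain H2 where H2: "(2, dirac H2) \<in> PR" "\<And>xs. length xs = 2 \<Longrightarrow> H2 xs = hval (xs!0)"
    using det_hval unfolding detk_def by blast
  define rnd :: pf where "rnd = (\<lambda>xs y. if y = hd xs \<or> y = hd xs + 1 then 1 / 2 else 0)"
  define G where "G = comp_pf 1 rnd [dirac H2]"
  have G: "(2, G) \<in> PR" unfolding G_def rnd_def
    by (rule PR.comp[OF PR.rand]) (use H2 in auto)
  have Gv: "G xs k = (if k = H2 xs \<or> k = H2 xs + 1 then 1/2 else 0)" for xs k
    using comp_dirac[of "[H2]" 1 rnd] unfolding G_def rnd_def by simp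
  define M where "M = mu_pf G"
  have M: "(1, M) \<in> PR" unfolding M_def using PR.mini[of 1 G] G by (simp add: numeral_2_eq_2)
  have Mv: "M [n] y = (if hval n = 0 then (1/2::real)^Suc y else 0)" for n y
  proof -
    have h: "H2 [n, z] = hval n" for z using H2(2)[of "[n,z]"] by simp
    show ?thesis
    proof (cases "hval n = 0")
      case True
      have s: "infsum (\<lambda>k. G [n, z] k) {0<..} = 1/2" for z
      proof -
        have "infsum (\<lambda>k. G [n, z] k) {0<..} = G [n, z] 1"
          by (rule infsum_single') (auto simp: Gv h True)
        then show ?thesis by (simp add: Gv h True)
      qed
      show ?thesis unfolding M_def mu_pf_def using True by (simp add: s Gv h)
    next
      case False
      then have "hval n = 1" using hval01[of n] by simp
      then show ?thesis unfolding M_def mu_pf_def using False by (simp add: Gv h)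
    qed
  qed
  define P :: pf where "P = (\<lambda>xs y. if y = xs ! (1 - 1) then 1 else 0)"
  have P: "(1, P) \<in> PR" unfolding P_def by (rule PR.proj) auto
  define F where "F = comp_pf 2 (dirac D2) [P, M]"
  have F: "(1, F) \<in> PR" unfolding F_def by (rule PR.comp[OF D2(1)]) (use P M in auto)
  have Fv: "F [n] w = I2P n w" for n w
  proof -
    let ?g = "\<lambda>zs. dirac D2 zs w * M [n] (zs!1)"
    have "F [n] w = infsum ?g (range (\<lambda>y. [n, y]))"
      unfolding F_def comp_pf_def
    proof (rule infsum_cong_neutral)
      fix zs :: "nat list" assume "zs \<in> {zs. length zs = 2} - range (\<lambda>y. [n, y])"
      then have l: "length zs = 2" and nr: "zs \<notin> range (\<lambda>y. [n, y])" by auto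
      from len2[OF l] obtain a b where zs0: "zs = [a, b]" by blast
      have "a \<noteq> n" using nr zs0 by auto
      then have zs: "zs = [a, b]" "a \<noteq> n" using zs0 by auto
      show "dirac D2 zs w * prod_list (map2 (\<lambda>g z. g [n] z) [P, M] zs) = 0"
        using zs by (simp add: P_def)
    next
      fix zs :: "nat list" assume "zs \<in> {zs. length zs = 2} \<inter> range (\<lambda>y. [n, y])"
      then obtain b where zs: "zs = [n, b]" by auto
      show "dirac D2 zs w * prod_list (map2 (\<lambda>g z. g [n] z) [P, M] zs) = ?g zs"
        using zs by (simp add: P_def)
    qed auto
    also have "\<dots> = infsum (?g \<circ> (\<lambda>y. [n, y])) UNIV"
      by (rule infsum_reindex) (auto simp: inj_on_def)
    also have "\<dots> = (\<Sum>\<^sub>\<infinity>y\<in>UNIV. (if w = digit n y then 1 else 0) * (if hval n = 0 then (1/2::real)^Suc y else 0))"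
      by (rule infsum_cong) (simp add: dirac_def D2(2) Mv)
    also have "\<dots> = I2P n w" by (rule value_sum)
    finally show ?thesis .
  qed
  show ?thesis using F Fv by blast
qed


end
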